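(* For every integer $n\ge 2$, $$\mathrm{spt}1_{do}(n)=2p_{de}(n-1)+p_{do}(n-1)\qquad\text{and}\qquad \mathrm{spt}1'_{do}(n)=-p'_{do}(n-1).$$
   Context: For a partition $\pi$, $s(\pi)$ is its smallest part. $\mathrm{Spt}1_{do}(n)$ is the set of partitions $\pi$ of $n$ in which $s(\pi)$ occurs exactly once and the remaining parts are pairwise distinct and each has parity different from that of $s(\pi)$. $B_0(1,n)$ (resp. $B_1(1,n)$) is the number of $\pi\in\mathrm{Spt}1_{do}(n)$ whose number of parts greater than $s(\pi)$ is even (resp. odd); $\mathrm{spt}1_{do}(n)=B_0(1,n)+B_1(1,n)$ and $\mathrm{spt}1'_{do}(n)=B_0(1,n)-B_1(1,n)$. $p_{de}(n)$ (resp. $p_{do}(n)$) is the number of partitions of $n$ into distinct even (resp. distinct odd) parts; $p'_{do}(n)$ is the number of partitions of $n$ into distinct odd parts with an even number of parts minus the number with an odd number of parts; all equal $1$ at $n=0$. *)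

theory Defs
  imports Main "HOL-Library.Multiset"
begin

definition partitions :: "nat \<Rightarrow> nat multiset set" where
  "partitions n = {p. (\<forall>x\<in>#p. 0 < x) \<and> sum_mset p = n}"

definition spart :: "nat multiset \<Rightarrow> nat" where
  "spart p = Min (set_mset p)"

definition Spt1_do :: "nat \<Rightarrow> nat multiset set" where
  "Spt1_do n = {p \<in> partitions n. p \<noteq> {#} \<and> count p (spart p) = 1 \<and>
     (\<forall>x \<in># p - {#spart p#}. count (p - {#spart p#}) x = 1 \<and> odd x \<noteq> odd (spart p))}"

definition num_larger :: "nat multiset \<Rightarrow> nat" where
  "num_larger p = size (filter_mset (\<lambda>x. spart p < x) p)"

definition B0 :: "nat \<Rightarrow> nat" where
  "B0 n = card {p \<in> Spt1_do n. even (num_larger p)}"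

definition B1 :: "nat \<Rightarrow> nat" where
  "B1 n = card {p \<in> Spt1_do n. odd (num_larger p)}"

definition spt1_do :: "nat \<Rightarrow> int" where
  "spt1_do n = int (B0 n) + int (B1 n)"

definition spt1'_do :: "nat \<Rightarrow> int" where
  "spt1'_do n = int (B0 n) - int (B1 n)"

definition distinct_parts :: "nat multiset \<Rightarrow> bool" where
  "distinct_parts p = (\<forall>x\<in>#p. count p x = 1)"

definition p_de :: "nat \<Rightarrow> int" where
  "p_de n = int (card {p \<in> partitions n. distinct_parts p \<and> (\<forall>x\<in>#p. even x)})"

definition p_do :: "nat \<Rightarrow> int" where
  "p_do n = int (card {p \<in> partitions n. distinct_parts p \<and> (\<forall>x\<in>#p. odd x)})"

definition p'_do :: "nat \<Rightarrow> int" where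
  "p'_do n = int (card {p \<in> partitions n. distinct_parts p \<and> (\<forall>x\<in>#p. odd x) \<and> even (size p)})
           - int (card {p \<in> partitions n. distinct_parts p \<and> (\<forall>x\<in>#p. odd x) \<and> odd (size p)})"

end

theory Submission imports Defs begin

lemma spart_add: assumes "\<forall>x\<in>#R. s < x" shows "spart (add_mset s R) = s"
  unfolding spart_def using assms by (intro Min_eqI) (auto intro: less_imp_le)

lemma filter_all: "\<forall>x\<in>#R. P x \<Longrightarrow> filter_mset P R = R"
  by (induction R) auto

lemma nl_add: assumes "\<forall>x\<in>#R. s < x" shows "num_larger (add_mset s R) = size R"
  unfolding num_larger_def spart_add[OF assms] using filter_all[OF assms] by simp

lemma part_bound: "(\<forall>x\<in>#p. 0 < (x::nat)) \<Longrightarrow> size p \<le> sum_mset p \<and> (\<forall>x\<in>#p. x \<le> sum_mset p)"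
  by (induction p) auto

lemma finite_partitions: "finite (partitions m)"
proof -
  have "partitions m \<subseteq> mset ` {xs. set xs \<subseteq> {..m} \<and> length xs \<le> m}"
  proof
    fix p assume p: "p \<in> partitions m"
    obtain xs where xs: "mset xs = p" using ex_mset by blast
    from p part_bound[of p] have "size p \<le> m" "\<forall>x\<in>#p. x \<le> m" by (auto simp: partitions_def)
    then show "p \<in> mset ` {xs. set xs \<subseteq> {..m} \<and> length xs \<le> m}"
      using xs by (auto intro!: image_eqI[of _ _ xs])
  qed
  then show ?thesis by (rule finite_subset) (intro finite_imageI finite_lists_length_le, simp)
qed

lemma Spt1_iff: "\<pi> \<in> Spt1_do n \<longleftrightarrow> (\<exists>s R. \<pi> = add_mset s R \<and> 0 < s \<and> s + sum_mset R = n \<and>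
   (\<forall>x\<in>#R. s < x \<and> odd x \<noteq> odd s \<and> count R x = 1))"
proof
  assume h: "\<pi> \<in> Spt1_do n"
  define s where "s = spart \<pi>"
  define R where "R = \<pi> - {#s#}"
  have ne: "\<pi> \<noteq> {#}" and c1: "count \<pi> s = 1" and pa: "\<pi> \<in> partitions n"
    and rest: "\<forall>x\<in>#R. count R x = 1 \<and> odd x \<noteq> odd s"
    using h unfolding Spt1_do_def s_def R_def by auto
  have sin: "s \<in># \<pi>" using c1 by (simp add: count_greater_zero_iff[symmetric])
  have pe: "\<pi> = add_mset s R" unfolding R_def using sin by simp
  have "count R s = 0" using c1 pe by simp
  then have sR: "s \<notin># R" by (simp add: not_in_iff)
  have gt: "\<forall>x\<in>#R. s < x"
  proof
    fix x assume x: "x \<in># R"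
    then have "x \<in># \<pi>" using pe by simp
    then have "s \<le> x" unfolding s_def spart_def by simp
    with x sR show "s < x" by (cases "s = x") auto
  qed
  show "\<exists>s R. \<pi> = add_mset s R \<and> 0 < s \<and> s + sum_mset R = n \<and>
   (\<forall>x\<in>#R. s < x \<and> odd x \<noteq> odd s \<and> count R x = 1)"
    using pe pa gt rest unfolding partitions_def by (intro exI[of _ s] exI[of _ R]) auto
next
  assume "\<exists>s R. \<pi> = add_mset s R \<and> 0 < s \<and> s + sum_mset R = n \<and>
   (\<forall>x\<in>#R. s < x \<and> odd x \<noteq> odd s \<and> count R x = 1)"
  then obtain s R where pe: "\<pi> = add_mset s R" and s0: "0 < s" and sm: "s + sum_mset R = n"
    and h: "\<forall>x\<in>#R. s < x \<and> odd x \<noteq> odd s \<and> count R x = 1" by blast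
  have gt: "\<forall>x\<in>#R. s < x" using h by blast
  have sp: "spart \<pi> = s" using pe spart_add[OF gt] by simp
  have sR: "s \<notin># R" using gt by blast
  then have "count R s = 0" by (simp add: not_in_iff)
  then have c1: "count \<pi> s = 1" using pe by simp
  have mR: "\<pi> - {#s#} = R" using pe by simp
  have pos: "\<forall>x\<in>#\<pi>. 0 < x" using pe s0 gt by auto
  have sum: "sum_mset \<pi> = n" using pe sm by simp
  have ne: "\<pi> \<noteq> {#}" using pe by simp
  have pa: "\<pi> \<in> partitions n" using pos sum by (simp add: partitions_def)
  have h2: "\<forall>x\<in>#R. count R x = 1 \<and> odd x \<noteq> odd s" using h by blast
  show "\<pi> \<in> Spt1_do n" unfolding Spt1_do_def mem_Collect_eq sp mR using pa ne c1 h2 by blast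
qed
definition Dset :: "(nat \<Rightarrow> bool) \<Rightarrow> nat \<Rightarrow> nat multiset set" where
  "Dset P m = {p \<in> partitions m. distinct_parts p \<and> (\<forall>x\<in>#p. P x)}"

lemma Dset_decomp:
  assumes E: "E \<in> Dset P m" and m: "m \<ge> 1"
  obtains t R where "E = add_mset t R" "spart E = t" "E - {#t#} = R" "0 < t" "P t"
    "t + sum_mset R = m" "\<forall>x\<in>#R. t < x \<and> P x \<and> count R x = 1"
proof -
  have ne: "E \<noteq> {#}" using E m unfolding Dset_def partitions_def by auto
  define t where "t = spart E"
  define R where "R = E - {#t#}"
  have tin: "t \<in># E" unfolding t_def spart_def using ne by simp
  have pe: "E = add_mset t R" unfolding R_def using tin by simp
  have c1: "count E t = 1" using E tin unfolding Dset_def distinct_parts_def by auto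
  have "count R t = 0" using c1 pe by simp
  then have sR: "t \<notin># R" by (simp add: not_in_iff)
  have gt: "\<forall>x\<in>#R. t < x"
  proof
    fix x assume x: "x \<in># R"
    then have "x \<in># E" using pe by simp
    then have "t \<le> x" unfolding t_def spart_def by simp
    with x sR show "t < x" by (cases "t = x") auto
  qed
  have cR: "\<forall>x\<in>#R. count R x = 1"
  proof
    fix x assume x: "x \<in># R"
    then have "x \<noteq> t" using sR by blast
    moreover have "count E x = 1" using E x pe unfolding Dset_def distinct_parts_def by auto
    ultimately show "count R x = 1" using pe by simp
  qed
  have pa: "E \<in> partitions m" "\<forall>x\<in>#E. P x" using E by (auto simp: Dset_def)
  have sE: "sum_mset E = m" using pa(1) by (simp add: partitions_def)
  show ?thesis
  proof (rule that[of t R])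
    show "E = add_mset t R" by (rule pe)
    show "spart E = t" by (simp add: t_def)
    show "E - {#t#} = R" by (simp add: R_def)
    show "0 < t" "P t" using pa tin by (auto simp: partitions_def)
    show "t + sum_mset R = m" using sE pe by (metis sum_mset.add_mset)
    show "\<forall>x\<in>#R. t < x \<and> P x \<and> count R x = 1" using gt cR pa(2) pe by auto
  qed
qed

lemma par2: "(t::nat) < x \<Longrightarrow> (odd x \<longleftrightarrow> odd t) \<Longrightarrow> t + 1 < x"
  by (metis Suc_eq_plus1 Suc_lessI even_Suc)

lemma bijAC:
  assumes n: "n \<ge> 2"
  shows "card {\<pi> \<in> Spt1_do n. spart \<pi> \<noteq> 1 \<and> odd (spart \<pi>) = c \<and> even (num_larger \<pi>) = e}
       = card {E \<in> Dset (\<lambda>x. odd x \<noteq> c) (n - 1). even (size E) \<noteq> e}"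
proof (rule bij_betw_same_card, rule bij_betw_byWitness[where f' = "\<lambda>E. add_mset (spart E + 1) (E - {#spart E#})"])
  let ?f = "\<lambda>\<pi>. add_mset (spart \<pi> - 1) (\<pi> - {#spart \<pi>#})"
  let ?g = "\<lambda>E. add_mset (spart E + 1) (E - {#spart E#})"
  let ?A = "{\<pi> \<in> Spt1_do n. spart \<pi> \<noteq> 1 \<and> odd (spart \<pi>) = c \<and> even (num_larger \<pi>) = e}"
  let ?B = "{E \<in> Dset (\<lambda>x. odd x \<noteq> c) (n - 1). even (size E) \<noteq> e}"
  have fwd: "?g (?f \<pi>) = \<pi> \<and> ?f \<pi> \<in> ?B" if p: "\<pi> \<in> ?A" for \<pi>
  proof -
    from p obtain s R where pe: "\<pi> = add_mset s R" and s0: "0 < s" and sm: "s + sum_mset R = n"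
      and h: "\<forall>x\<in>#R. s < x \<and> odd x \<noteq> odd s \<and> count R x = 1" unfolding Spt1_iff by blast
    have gt: "\<forall>x\<in>#R. s < x" using h by blast
    have sp: "spart \<pi> = s" using pe spart_add[OF gt] by simp
    have s2: "s \<ge> 2" using p sp s0 by auto
    have gt': "\<forall>x\<in>#R. s - 1 < x" using gt by fastforce
    have fp: "?f \<pi> = add_mset (s - 1) R" using pe sp by simp
    have sp': "spart (?f \<pi>) = s - 1" using fp spart_add[OF gt'] by simp
    have nl: "num_larger \<pi> = size R" using pe nl_add[OF gt] by simp
    have "s - 1 \<notin># R" using gt' by blast
    then have c0: "count R (s - 1) = 0" by (simp add: not_in_iff)
    have "?f \<pi> \<in> Dset (\<lambda>x. odd x \<noteq> c) (n - 1)"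
      unfolding Dset_def partitions_def distinct_parts_def fp
    proof (intro CollectI conjI ballI)
      fix x assume "x \<in># add_mset (s - 1) R"
      then show "0 < x" "count (add_mset (s - 1) R) x = 1" "odd x \<noteq> c"
        using h s2 c0 p sp gt by (auto simp: count_add_mset)
    next
      show "sum_mset (add_mset (s - 1) R) = n - 1" using sm s2 by simp
    qed
    moreover have "even (size (?f \<pi>)) \<noteq> e" using fp nl p by auto
    moreover have "?g (?f \<pi>) = \<pi>" using sp' fp pe s2 by simp
    ultimately show ?thesis by simp
  qed
  have bwd: "?f (?g E) = E \<and> ?g E \<in> ?A" if p: "E \<in> ?B" for E
  proof -
    from p have E: "E \<in> Dset (\<lambda>x. odd x \<noteq> c) (n - 1)" by simp
    obtain t R where pe: "E = add_mset t R" and sp: "spart E = t" and mR: "E - {#t#} = R"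
      and t0: "0 < t" and pt: "odd t \<noteq> c" and sm: "t + sum_mset R = n - 1"
      and h: "\<forall>x\<in>#R. t < x \<and> (odd x \<noteq> c) \<and> count R x = 1"
      using Dset_decomp[OF E] n by (metis One_nat_def diff_le_mono numeral_2_eq_2 diff_Suc_1)
    have gt: "\<forall>x\<in>#R. t + 1 < x" using h pt par2 by blast
    have gp: "?g E = add_mset (t + 1) R" using sp mR by simp
    have sp': "spart (?g E) = t + 1" using gp spart_add[OF gt] by simp
    have nl: "num_larger (?g E) = size R" using gp nl_add[OF gt] by simp
    have "?g E \<in> Spt1_do n" unfolding Spt1_iff
      apply (rule exI[of _ "t+1"], rule exI[of _ R])
      using gp sm n gt h pt by auto
    moreover have "spart (?g E) \<noteq> 1 \<and> odd (spart (?g E)) = c \<and> even (num_larger (?g E)) = e"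
      using sp' t0 pt nl p pe by auto
    moreover have "?f (?g E) = E" using sp' gp pe by simp
    ultimately show ?thesis by simp
  qed
  show "\<forall>a\<in>?A. ?g (?f a) = a" using fwd by blast
  show "\<forall>a\<in>?B. ?f (?g a) = a" using bwd by blast
  show "?f ` ?A \<subseteq> ?B" using fwd by blast
  show "?g ` ?B \<subseteq> ?A" using bwd by blast
qed

lemma bijB:
  assumes n: "n \<ge> 2"
  shows "card {\<pi> \<in> Spt1_do n. spart \<pi> = 1 \<and> even (num_larger \<pi>) = e}
       = card {E \<in> Dset even (n - 1). even (size E) = e}"
proof (rule bij_betw_same_card, rule bij_betw_byWitness[where f = "\<lambda>\<pi>. \<pi> - {#1#}" and f' = "\<lambda>E. add_mset 1 E"])
  let ?A = "{\<pi> \<in> Spt1_do n. spart \<pi> = 1 \<and> even (num_larger \<pi>) = e}"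
  let ?B = "{E \<in> Dset even (n - 1). even (size E) = e}"
  have fwd: "add_mset 1 (\<pi> - {#1#}) = \<pi> \<and> \<pi> - {#1#} \<in> ?B" if p: "\<pi> \<in> ?A" for \<pi>
  proof -
    from p obtain s R where pe: "\<pi> = add_mset s R" and s0: "0 < s" and sm: "s + sum_mset R = n"
      and h: "\<forall>x\<in>#R. s < x \<and> odd x \<noteq> odd s \<and> count R x = 1" unfolding Spt1_iff by blast
    have gt: "\<forall>x\<in>#R. s < x" using h by blast
    have sp: "spart \<pi> = s" using pe spart_add[OF gt] by simp
    have s1: "s = 1" using p sp by simp
    have nl: "num_larger \<pi> = size R" using pe nl_add[OF gt] by simp
    have "R \<in> Dset even (n - 1)" unfolding Dset_def partitions_def distinct_parts_def
      using h s1 sm by auto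
    then show ?thesis using pe s1 nl p by auto
  qed
  have bwd: "add_mset 1 E - {#1#} = E \<and> add_mset 1 E \<in> ?A" if p: "E \<in> ?B" for E
  proof -
    from p have E: "E \<in> Dset even (n - 1)" by simp
    have gt: "\<forall>x\<in>#E. 1 < x"
    proof
      fix x assume x: "x \<in># E"
      then have "0 < x" "even x" using E unfolding Dset_def partitions_def by auto
      then show "1 < x" by (metis One_nat_def Suc_lessI odd_one)
    qed
    have "add_mset 1 E \<in> Spt1_do n" unfolding Spt1_iff
      apply (rule exI[of _ 1], rule exI[of _ E])
      using E gt n unfolding Dset_def partitions_def distinct_parts_def by auto
    moreover have "spart (add_mset 1 E) = 1" using spart_add[OF gt] .
    moreover have "num_larger (add_mset 1 E) = size E" using nl_add[OF gt] .
    ultimately show ?thesis using p by auto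
  qed
  show "\<forall>a\<in>?A. add_mset 1 (a - {#1#}) = a" using fwd by blast
  show "\<forall>a\<in>?B. add_mset 1 a - {#1#} = a" using bwd by blast
  show "(\<lambda>\<pi>. \<pi> - {#1#}) ` ?A \<subseteq> ?B" using fwd by blast
  show "(\<lambda>E. add_mset 1 E) ` ?B \<subseteq> ?A" using bwd by blast
qed

lemma card_split: "finite A \<Longrightarrow> card A = card {x\<in>A. P x} + card {x\<in>A. \<not> P x}"
  by (subst card_Un_disjoint[symmetric]) (auto intro: arg_cong[where f=card])

lemma finite_Spt1: "finite (Spt1_do n)"
  by (rule finite_subset[OF _ finite_partitions[of n]]) (auto simp: Spt1_do_def)

lemma finite_Dset: "finite (Dset P m)"
  by (rule finite_subset[OF _ finite_partitions[of m]]) (auto simp: Dset_def)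

lemma split3:
  assumes n: "n \<ge> 2"
  shows "card {\<pi> \<in> Spt1_do n. even (num_larger \<pi>) = e} =
     card {E \<in> Dset even (n - 1). even (size E) = e}
   + card {E \<in> Dset even (n - 1). even (size E) \<noteq> e}
   + card {E \<in> Dset odd (n - 1). even (size E) \<noteq> e}"
proof -
  let ?S = "{\<pi> \<in> Spt1_do n. even (num_larger \<pi>) = e}"
  have fS: "finite ?S" using finite_Spt1 by simp
  have "card ?S = card {\<pi>\<in>?S. spart \<pi> = 1} + card {\<pi>\<in>?S. spart \<pi> \<noteq> 1}"
    using card_split[OF fS] .
  also have "card {\<pi>\<in>?S. spart \<pi> \<noteq> 1} =
      card {\<pi>\<in>{\<pi>\<in>?S. spart \<pi> \<noteq> 1}. odd (spart \<pi>)} + card {\<pi>\<in>{\<pi>\<in>?S. spart \<pi> \<noteq> 1}. \<not> odd (spart \<pi>)}"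
    by (rule card_split) (use finite_Spt1[of n] in simp)
  also have "{\<pi>\<in>?S. spart \<pi> = 1} = {\<pi> \<in> Spt1_do n. spart \<pi> = 1 \<and> even (num_larger \<pi>) = e}" by auto
  also have "{\<pi>\<in>{\<pi>\<in>?S. spart \<pi> \<noteq> 1}. odd (spart \<pi>)} =
      {\<pi> \<in> Spt1_do n. spart \<pi> \<noteq> 1 \<and> odd (spart \<pi>) = True \<and> even (num_larger \<pi>) = e}" by auto
  also have "{\<pi>\<in>{\<pi>\<in>?S. spart \<pi> \<noteq> 1}. \<not> odd (spart \<pi>)} =
      {\<pi> \<in> Spt1_do n. spart \<pi> \<noteq> 1 \<and> odd (spart \<pi>) = False \<and> even (num_larger \<pi>) = e}" by auto
  finally show ?thesis using bijB[OF n] bijAC[OF n, of True e] bijAC[OF n, of False e] by simp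
qed

theorem theorem3p1:
  fixes n :: nat
  assumes "n \<ge> 2"
  shows "spt1_do n = 2 * p_de (n - 1) + p_do (n - 1) \<and> spt1'_do n = - p'_do (n - 1)"
proof -
  have b0: "B0 n = card {\<pi> \<in> Spt1_do n. even (num_larger \<pi>) = True}" unfolding B0_def by simp
  have b1: "B1 n = card {\<pi> \<in> Spt1_do n. even (num_larger \<pi>) = False}" unfolding B1_def by simp
  have de: "p_de (n-1) = int (card {E \<in> Dset even (n - 1). even (size E)}) + int (card {E \<in> Dset even (n - 1). \<not> even (size E)})"
    unfolding p_de_def using card_split[OF finite_Dset, of even "n-1" "\<lambda>E. even (size E)"]
    by (simp add: Dset_def)
  have do: "p_do (n-1) = int (card {E \<in> Dset odd (n - 1). even (size E)}) + int (card {E \<in> Dset odd (n - 1). \<not> even (size E)})"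
    unfolding p_do_def using card_split[OF finite_Dset, of odd "n-1" "\<lambda>E. even (size E)"]
    by (simp add: Dset_def)
  have do': "p'_do (n-1) = int (card {E \<in> Dset odd (n - 1). even (size E)}) - int (card {E \<in> Dset odd (n - 1). \<not> even (size E)})"
    unfolding p'_do_def Dset_def by (simp add: conj_assoc)
  show ?thesis
    unfolding spt1_do_def spt1'_do_def b0 b1 split3[OF assms] de do do' by simp
qed

end
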